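(* Let $\Phi=\{\varphi_n\}_{n=1}^N\subseteq\mathbb{R}^M$ and let $\mathcal{A}\colon\mathbb{R}^M/\{\pm1\}\to\mathbb{R}^N$ be defined by $(\mathcal{A}(x))(n):=|\langle x,\varphi_n\rangle|^2$. For $x\in\mathbb{R}^M$, $\mathcal{A}^{-1}(\mathcal{A}(x))=\{\pm x\}$ if and only if for every $S\subseteq\{1,\ldots,N\}$, $$x\notin\big(\operatorname{span}(\Phi_S)^\perp\setminus\{0\}\big)+\big(\operatorname{span}(\Phi_{S^\mathrm{c}})^\perp\setminus\{0\}\big).$$ Consequently, $\mathcal{A}$ is almost injective if and only if almost every $x\in\mathbb{R}^M$ lies outside this Minkowski sum for all $S\subseteq\{1,\ldots,N\}$.
   Context: For $S\subseteq\{1,\ldots,N\}$, $\Phi_S:=\{\varphi_n\}_{n\in S}$ and $S^\mathrm{c}$ is the complement of $S$ in $\{1,\ldots,N\}$; the span of the empty set is $\{0\}$. The sum $A+B=\{a+b:a\in A,b\in B\}$ is the Minkowski sum. The map $\mathcal{A}$ is called almost injective if $\mathcal{A}^{-1}(\mathcal{A}(x))=\{\pm x\}$ for (Lebesgue) almost every $x\in\mathbb{R}^M$. *)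

theory Defs
  imports "HOL-Analysis.Analysis" "HOL-Library.Set_Algebras"
begin

text \<open>Intensity measurement map: (A x)(n) = |<x, phi_n>|^2 for n in {1..N}
  (set to 0 outside the index range, so that A x is a vector in R^N).\<close>
definition intensity_map :: "(nat \<Rightarrow> 'a::real_inner) \<Rightarrow> nat \<Rightarrow> 'a \<Rightarrow> (nat \<Rightarrow> real)" where
  "intensity_map \<phi> N x = (\<lambda>n. if n \<in> {1..N} then \<bar>x \<bullet> \<phi> n\<bar> ^ 2 else 0)"

definition bad_sum :: "(nat \<Rightarrow> 'a::real_inner) \<Rightarrow> nat \<Rightarrow> nat set \<Rightarrow> 'a set" where
  "bad_sum \<phi> N S =
     (orthogonal_comp (span (\<phi> ` S)) - {0}) + (orthogonal_comp (span (\<phi> ` ({1..N} - S))) - {0})"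

end

theory Submission
  imports Defs
begin

lemma perp_iff:
  fixes \<phi> :: "nat \<Rightarrow> 'a::real_inner"
  shows "x \<in> orthogonal_comp (span (\<phi> ` S)) \<longleftrightarrow> (\<forall>n\<in>S. x \<bullet> \<phi> n = 0)"
proof
  assume "x \<in> orthogonal_comp (span (\<phi> ` S))"
  then show "\<forall>n\<in>S. x \<bullet> \<phi> n = 0"
    by (auto simp: orthogonal_comp_def orthogonal_def inner_commute dest!: bspec[OF _ span_base])
next
  assume h: "\<forall>n\<in>S. x \<bullet> \<phi> n = 0"
  show "x \<in> orthogonal_comp (span (\<phi> ` S))"
    unfolding orthogonal_comp_def
  proof (clarify)
    fix y assume "y \<in> span (\<phi> ` S)"
    then have "orthogonal x y"
      by (rule orthogonal_to_span) (use h in \<open>auto simp: orthogonal_def\<close>)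
    then show "orthogonal y x" by (simp add: orthogonal_commute)
  qed
qed

lemma im_eq:
  "intensity_map \<phi> N y = intensity_map \<phi> N x \<longleftrightarrow>
     (\<forall>n\<in>{1..N}. y \<bullet> \<phi> n = x \<bullet> \<phi> n \<or> y \<bullet> \<phi> n = - (x \<bullet> \<phi> n))"
proof -
  have "intensity_map \<phi> N y = intensity_map \<phi> N x \<longleftrightarrow>
     (\<forall>n\<in>{1..N}. (y \<bullet> \<phi> n)^2 = (x \<bullet> \<phi> n)^2)"
    unfolding intensity_map_def fun_eq_iff by (auto simp: power2_abs)
  also have "\<dots> \<longleftrightarrow> (\<forall>n\<in>{1..N}. y \<bullet> \<phi> n = x \<bullet> \<phi> n \<or> y \<bullet> \<phi> n = - (x \<bullet> \<phi> n))"
    by (simp add: power2_eq_iff)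
  finally show ?thesis .
qed

lemma pointwise:
  fixes \<phi> :: "nat \<Rightarrow> 'a::real_inner"
  shows "(intensity_map \<phi> N -` {intensity_map \<phi> N x} = {x, -x})
              \<longleftrightarrow> (\<forall>S. S \<subseteq> {1..N} \<longrightarrow> x \<notin> bad_sum \<phi> N S)"
proof
  assume pre: "intensity_map \<phi> N -` {intensity_map \<phi> N x} = {x, -x}"
  show "\<forall>S. S \<subseteq> {1..N} \<longrightarrow> x \<notin> bad_sum \<phi> N S"
  proof (intro allI impI notI)
    fix S assume "S \<subseteq> {1..N}" "x \<in> bad_sum \<phi> N S"
    then obtain u v where u: "u \<in> orthogonal_comp (span (\<phi> ` S))" "u \<noteq> 0"
      and v: "v \<in> orthogonal_comp (span (\<phi> ` ({1..N} - S)))" "v \<noteq> 0" and x: "x = u + v"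
      unfolding bad_sum_def set_plus_def by blast
    have u': "\<forall>n\<in>S. u \<bullet> \<phi> n = 0" and v': "\<forall>n\<in>{1..N} - S. v \<bullet> \<phi> n = 0"
      using u v perp_iff by blast+
    let ?y = "v - u"
    have "intensity_map \<phi> N ?y = intensity_map \<phi> N x"
      unfolding im_eq using u' v' x by (auto simp: inner_diff_left inner_add_left)
    then have "?y \<in> {x, -x}" using pre by blast
    then show False using x u(2) v(2) by (auto simp: algebra_simps simp flip: scaleR_2)
  qed
next
  assume H: "\<forall>S. S \<subseteq> {1..N} \<longrightarrow> x \<notin> bad_sum \<phi> N S"
  show "intensity_map \<phi> N -` {intensity_map \<phi> N x} = {x, -x}"
  proof (rule set_eqI, rule iffI)
    fix y assume "y \<in> intensity_map \<phi> N -` {intensity_map \<phi> N x}"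
    then have e: "\<forall>n\<in>{1..N}. y \<bullet> \<phi> n = x \<bullet> \<phi> n \<or> y \<bullet> \<phi> n = - (x \<bullet> \<phi> n)"
      using im_eq[of \<phi> N y x] by simp
    show "y \<in> {x, -x}"
    proof (rule ccontr)
      assume ny: "y \<notin> {x, -x}"
      define S where "S = {n\<in>{1..N}. (x - y) \<bullet> \<phi> n = 0}"
      define u where "u = (1/2) *\<^sub>R (x - y)"
      define v where "v = (1/2) *\<^sub>R (x + y)"
      have "\<forall>n\<in>S. u \<bullet> \<phi> n = 0" unfolding S_def u_def by auto
      then have "u \<in> orthogonal_comp (span (\<phi> ` S))" using perp_iff by blast
      moreover have "\<forall>n\<in>{1..N} - S. v \<bullet> \<phi> n = 0"
        unfolding S_def v_def using e by (auto simp: inner_diff_left inner_add_left)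
      then have "v \<in> orthogonal_comp (span (\<phi> ` ({1..N} - S)))" using perp_iff by blast
      moreover have "u \<noteq> 0" "v \<noteq> 0" using ny unfolding u_def v_def
        by (auto simp del: scaleR_add_right scaleR_diff_right simp add: add_eq_0_iff2 add.commute)
      moreover have "x = u + v"
      proof -
        have "u + v = (1/2) *\<^sub>R ((x - y) + (x + y))" unfolding u_def v_def
          by (simp only: scaleR_add_right)
        also have "(x - y) + (x + y) = 2 *\<^sub>R x" by (simp add: scaleR_2)
        finally show ?thesis by simp
      qed
      ultimately have "x \<in> bad_sum \<phi> N S" unfolding bad_sum_def by blast
      moreover have "S \<subseteq> {1..N}" unfolding S_def by auto
      ultimately show False using H by blast
    qed
  next
    fix y assume "y \<in> {x, -x}"
    then show "y \<in> intensity_map \<phi> N -` {intensity_map \<phi> N x}"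
      using im_eq by fastforce
  qed
qed

theorem lemma9:
  fixes \<phi> :: "nat \<Rightarrow> 'a::euclidean_space" and N :: nat
  shows "(\<forall>x::'a. (intensity_map \<phi> N -` {intensity_map \<phi> N x} = {x, -x})
              \<longleftrightarrow> (\<forall>S. S \<subseteq> {1..N} \<longrightarrow> x \<notin> bad_sum \<phi> N S))
       \<and> ((AE x in lebesgue. intensity_map \<phi> N -` {intensity_map \<phi> N x} = {x, -x})
              \<longleftrightarrow> (AE x in lebesgue. \<forall>S. S \<subseteq> {1..N} \<longrightarrow> x \<notin> bad_sum \<phi> N S))"
  using pointwise[of \<phi> N] by simp

end
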